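(* Every completely dependent three-dimensional copula is generalized simplified.
   Context: $\mathbb{I}=[0,1]$, $\lambda$ Lebesgue measure; points of $\mathbb{I}^3$ are written $(\mathbf{u},v)$ with $\mathbf{u}=(u_1,u_2)\in\mathbb{I}^2$. For a three-dimensional copula $C$, its Markov kernel $K_C:\mathbb{I}\times\mathcal{B}(\mathbb{I}^2)\to\mathbb{I}$ is (a version of) the regular conditional distribution of $(U_1,U_2)$ given $U_3=v$, $(U_1,U_2,U_3)\sim C$, so $C(\mathbf{u},v)=\int_{[0,v]}K_C(t,[\mathbf{0},\mathbf{u}])\,d\lambda(t)$. The conditional univariate distribution functions are $F_{1|3}(u_1|t)=K_C(t,[0,u_1]\times\mathbb{I})$ and $F_{2|3}(u_2|t)=K_C(t,\mathbb{I}\times[0,u_2])$. A copula $C$ is completely dependent (w.r.t. the last coordinate) if there exist $\lambda$-preserving maps $h_1,h_2:\mathbb{I}\to\mathbb{I}$ (i.e. $\lambda(h_i^{-1}(F))=\lambda(F)$ for all Borel $F$) such that $K(v,E)=\mathbf{1}_E(h_1(v),h_2(v))$ is a Markov kernel of $C$. A three-dimensional copula $C$ is generalized simplified if there exists a bivariate copula $A$ with $C(\mathbf{u},v)=\int_{[0,v]}A(F_{1|3}(u_1|t),F_{2|3}(u_2|t))\,d\lambda(t)$ for all $(\mathbf{u},v)\in\mathbb{I}^2\times\mathbb{I}$. *)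

theory Defs
  imports "HOL-Probability.Probability"
begin

abbreviation unitI :: "real set" where "unitI \<equiv> {0..1}"

definition lebI :: "real measure" where
  "lebI = restrict_space lborel {0..1}"

definition borelI2 :: "(real \<times> real) measure" where
  "borelI2 = restrict_space borel ({0..1} \<times> {0..1})"

definition copula2 :: "(real \<Rightarrow> real \<Rightarrow> real) \<Rightarrow> bool" where
  "copula2 A \<longleftrightarrow>
     (\<forall>u\<in>unitI. A u 0 = 0 \<and> A 0 u = 0 \<and> A u 1 = u \<and> A 1 u = u) \<and>
     (\<forall>a1\<in>unitI. \<forall>b1\<in>unitI. \<forall>a2\<in>unitI. \<forall>b2\<in>unitI. a1 \<le> b1 \<longrightarrow> a2 \<le> b2 \<longrightarrow>
        A b1 b2 - A a1 b2 - A b1 a2 + A a1 a2 \<ge> 0)"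

definition copula3 :: "(real \<Rightarrow> real \<Rightarrow> real \<Rightarrow> real) \<Rightarrow> bool" where
  "copula3 C \<longleftrightarrow>
     (\<forall>x\<in>unitI. \<forall>y\<in>unitI. C 0 x y = 0 \<and> C x 0 y = 0 \<and> C x y 0 = 0) \<and>
     (\<forall>u\<in>unitI. C u 1 1 = u \<and> C 1 u 1 = u \<and> C 1 1 u = u) \<and>
     (\<forall>a1\<in>unitI. \<forall>b1\<in>unitI. \<forall>a2\<in>unitI. \<forall>b2\<in>unitI. \<forall>a3\<in>unitI. \<forall>b3\<in>unitI.
        a1 \<le> b1 \<longrightarrow> a2 \<le> b2 \<longrightarrow> a3 \<le> b3 \<longrightarrow>
        C b1 b2 b3 - C a1 b2 b3 - C b1 a2 b3 - C b1 b2 a3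
        + C a1 a2 b3 + C a1 b2 a3 + C b1 a2 a3 - C a1 a2 a3 \<ge> 0)"

text \<open>K is (a version of) the Markov kernel of C w.r.t. the last coordinate:
  t \<mapsto> K t is a measurable map from [0,1] into probability measures on the
  Borel sets of the unit square, and C(u,v) = \<integral>_[0,v] K(t,[0,u]) d\<lambda>(t).\<close>
definition markov_kernel_of ::
  "(real \<Rightarrow> real \<Rightarrow> real \<Rightarrow> real) \<Rightarrow> (real \<Rightarrow> (real \<times> real) measure) \<Rightarrow> bool" where
  "markov_kernel_of C K \<longleftrightarrow>
     K \<in> measurable lebI (prob_algebra borelI2) \<and>
     (\<forall>u1\<in>unitI. \<forall>u2\<in>unitI. \<forall>v\<in>unitI.
        C u1 u2 v = (LINT t:{0..v}|lborel. measure (K t) ({0..u1} \<times> {0..u2})))"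

definition F13 :: "(real \<Rightarrow> (real \<times> real) measure) \<Rightarrow> real \<Rightarrow> real \<Rightarrow> real" where
  "F13 K u1 t = measure (K t) ({0..u1} \<times> {0..1})"

definition F23 :: "(real \<Rightarrow> (real \<times> real) measure) \<Rightarrow> real \<Rightarrow> real \<Rightarrow> real" where
  "F23 K u2 t = measure (K t) ({0..1} \<times> {0..u2})"

definition lambda_preserving :: "(real \<Rightarrow> real) \<Rightarrow> bool" where
  "lambda_preserving h \<longleftrightarrow> h \<in> measurable lebI lebI \<and> distr lebI lebI h = lebI"

definition completely_dependent :: "(real \<Rightarrow> real \<Rightarrow> real \<Rightarrow> real) \<Rightarrow> bool" where
  "completely_dependent C \<longleftrightarrow>
     (\<exists>h1 h2. lambda_preserving h1 \<and> lambda_preserving h2 \<and>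
        markov_kernel_of C (\<lambda>v. return borelI2 (h1 v, h2 v)))"

text \<open>Generalized simplified, relative to the chosen version K of the Markov kernel of C.\<close>
definition generalized_simplified ::
  "(real \<Rightarrow> real \<Rightarrow> real \<Rightarrow> real) \<Rightarrow> (real \<Rightarrow> (real \<times> real) measure) \<Rightarrow> bool" where
  "generalized_simplified C K \<longleftrightarrow>
     (\<exists>A. copula2 A \<and>
        (\<forall>u1\<in>unitI. \<forall>u2\<in>unitI. \<forall>v\<in>unitI.
           C u1 u2 v = (LINT t:{0..v}|lborel. A (F13 K u1 t) (F23 K u2 t))))"

end

theory Submission
  imports Defs
begin

lemma core:
  fixes f g :: "real \<Rightarrow> real"
  assumes fm: "f \<in> borel_measurable lebI" and gm: "g \<in> borel_measurable lebI"
    and fb: "\<And>t. t \<in> {0..1} \<Longrightarrow> 0 \<le> f t \<and> f t \<le> 1"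
    and gb: "\<And>t. t \<in> {0..1} \<Longrightarrow> 0 \<le> g t \<and> g t \<le> 1"
    and eq: "\<And>v. v \<in> {0..1} \<Longrightarrow> (LINT t:{0..v}|lborel. f t) = (LINT t:{0..v}|lborel. g t)"
  shows "AE t in lebI. f t = g t"
proof -
  define F where "F t = indicator {0..1} t * f t" for t
  define G where "G t = indicator {0..1} t * g t" for t
  have Fm[measurable]: "F \<in> borel_measurable lborel"
    using fm unfolding F_def lebI_def
    by (subst (asm) borel_measurable_restrict_space_iff) auto
  have Gm[measurable]: "G \<in> borel_measurable lborel"
    using gm unfolding G_def lebI_def
    by (subst (asm) borel_measurable_restrict_space_iff) auto
  have Fnn: "0 \<le> F t" "F t \<le> indicator {0..1} t" for t
    using fb[of t] by (auto simp: F_def indicator_def)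
  have Gnn: "0 \<le> G t" "G t \<le> indicator {0..1} t" for t
    using gb[of t] by (auto simp: G_def indicator_def)
  have ii: "integrable lborel (\<lambda>t::real. indicator {0..1} t :: real)"
    by (auto simp add: integrable_indicator_iff emeasure_lborel_Icc)
  have Fle: "norm (F t * indicator A t) \<le> norm (indicator {0..1} t :: real)" for t A
    using fb[of t] by (auto simp: F_def indicator_def)
  have Fi: "integrable lborel (\<lambda>t. F t * indicator A t)" if [measurable]: "A \<in> sets borel" for A
    by (rule Bochner_Integration.integrable_bound[OF ii]) (auto intro!: AE_I2 Fle[simplified])
  have Gle: "norm (G t * indicator A t) \<le> norm (indicator {0..1} t :: real)" for t A
    using gb[of t] by (auto simp: G_def indicator_def)
  have Gi: "integrable lborel (\<lambda>t. G t * indicator A t)" if [measurable]: "A \<in> sets borel" for A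
    by (rule Bochner_Integration.integrable_bound[OF ii]) (auto intro!: AE_I2 Gle[simplified])
  have intF: "(LINT t|lborel. F t * indicator {..x} t) = (LINT t:{0..1} \<inter> {..x}|lborel. f t)" for x
    unfolding set_lebesgue_integral_def F_def
    by (intro Bochner_Integration.integral_cong) (auto simp: indicator_def)
  have intG: "(LINT t|lborel. G t * indicator {..x} t) = (LINT t:{0..1} \<inter> {..x}|lborel. g t)" for x
    unfolding set_lebesgue_integral_def G_def
    by (intro Bochner_Integration.integral_cong) (auto simp: indicator_def)
  have eqx: "(LINT t:{0..1} \<inter> {..x}|lborel. f t) = (LINT t:{0..1} \<inter> {..x}|lborel. g t)" for x
  proof -
    consider "x < 0" | "0 \<le> x" "x \<le> 1" | "1 < x" by linarith
    then show ?thesis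
    proof cases
      case 1 then have "{0..1} \<inter> {..x} = {}" by auto
      then show ?thesis by (simp add: set_lebesgue_integral_def)
    next
      case 2 then have "{0..1} \<inter> {..x} = {0..x}" by auto
      then show ?thesis using eq[of x] 2 by simp
    next
      case 3 then have "{0..1} \<inter> {..x} = {0..1}" by auto
      then show ?thesis using eq[of 1] by simp
    qed
  qed
  have emF: "emeasure (density lborel (\<lambda>t. ennreal (F t))) A = ennreal (LINT t|lborel. F t * indicator A t)"
    if [measurable]: "A \<in> sets borel" for A
  proof -
    have "emeasure (density lborel (\<lambda>t. ennreal (F t))) A = (\<integral>\<^sup>+ t. ennreal (F t * indicator A t) \<partial>lborel)"
      by (subst emeasure_density) (auto intro!: nn_integral_cong simp: indicator_def)
    also have "\<dots> = ennreal (LINT t|lborel. F t * indicator A t)"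
      by (rule nn_integral_eq_integral[OF Fi[OF that]]) (auto simp: Fnn)
    finally show ?thesis .
  qed
  have emG: "emeasure (density lborel (\<lambda>t. ennreal (G t))) A = ennreal (LINT t|lborel. G t * indicator A t)"
    if [measurable]: "A \<in> sets borel" for A
  proof -
    have "emeasure (density lborel (\<lambda>t. ennreal (G t))) A = (\<integral>\<^sup>+ t. ennreal (G t * indicator A t) \<partial>lborel)"
      by (subst emeasure_density) (auto intro!: nn_integral_cong simp: indicator_def)
    also have "\<dots> = ennreal (LINT t|lborel. G t * indicator A t)"
      by (rule nn_integral_eq_integral[OF Gi[OF that]]) (auto simp: Gnn)
    finally show ?thesis .
  qed
  have finF: "finite_borel_measure (density lborel (\<lambda>t. ennreal (F t)))"
    unfolding finite_borel_measure_def finite_borel_measure_axioms_def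
    using emF[of UNIV] by (auto intro!: finite_measureI)
  have finG: "finite_borel_measure (density lborel (\<lambda>t. ennreal (G t)))"
    unfolding finite_borel_measure_def finite_borel_measure_axioms_def
    using emG[of UNIV] by (auto intro!: finite_measureI)
  have deq: "density lborel (\<lambda>t. ennreal (F t)) = density lborel (\<lambda>t. ennreal (G t))"
  proof (rule cdf_unique'[OF finF finG])
    show "cdf (density lborel (\<lambda>t. ennreal (F t))) = cdf (density lborel (\<lambda>t. ennreal (G t)))"
      unfolding cdf_def
    proof
      fix x
      show "measure (density lborel (\<lambda>t. ennreal (F t))) {..x} = measure (density lborel (\<lambda>t. ennreal (G t))) {..x}"
        unfolding measure_def using emF[of "{..x}"] emG[of "{..x}"] intF[of x] intG[of x] eqx[of x]
        by simp
    qed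
  qed
  have "AE t in lborel. ennreal (F t) = ennreal (G t)"
    by (rule sigma_finite_measure.density_unique[OF sigma_finite_lborel _ _ deq]) auto
  then have "AE t in lborel. t \<in> {0..1} \<longrightarrow> f t = g t"
    by eventually_elim (auto simp: F_def G_def fb gb)
  then show ?thesis
    unfolding lebI_def by (subst AE_restrict_space_iff) auto
qed

lemma AE_lebI_set_integral:
  fixes P Q :: "real \<Rightarrow> real"
  assumes Pm: "P \<in> borel_measurable lebI" and Qm: "Q \<in> borel_measurable lebI"
    and ae: "AE t in lebI. P t = Q t" and v: "v \<le> 1"
  shows "(LINT t:{0..v}|lborel. P t) = (LINT t:{0..v}|lborel. Q t)"
proof -
  define P' where "P' t = indicator {0..1} t * P t" for t
  define Q' where "Q' t = indicator {0..1} t * Q t" for t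
  have [measurable]: "P' \<in> borel_measurable lborel"
    using Pm unfolding P'_def lebI_def
    by (subst (asm) borel_measurable_restrict_space_iff) auto
  have [measurable]: "Q' \<in> borel_measurable lborel"
    using Qm unfolding Q'_def lebI_def
    by (subst (asm) borel_measurable_restrict_space_iff) auto
  have 1: "(LINT t:{0..v}|lborel. P t) = (LINT t:{0..v}|lborel. P' t)"
    unfolding set_lebesgue_integral_def P'_def
    by (intro Bochner_Integration.integral_cong) (use v in \<open>auto simp: indicator_def\<close>)
  have 2: "(LINT t:{0..v}|lborel. Q t) = (LINT t:{0..v}|lborel. Q' t)"
    unfolding set_lebesgue_integral_def Q'_def
    by (intro Bochner_Integration.integral_cong) (use v in \<open>auto simp: indicator_def\<close>)
  have "AE t in lborel. t \<in> {0..1} \<longrightarrow> P t = Q t"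
    using ae unfolding lebI_def by (subst (asm) AE_restrict_space_iff) auto
  then have "AE t\<in>{0..v} in lborel. P' t = Q' t"
    by eventually_elim (use v in \<open>auto simp: P'_def Q'_def\<close>)
  then have "(LINT t:{0..v}|lborel. P' t) = (LINT t:{0..v}|lborel. Q' t)"
    by (intro set_lebesgue_integral_cong_AE) auto
  then show ?thesis using 1 2 by simp
qed

lemma box_sets: 
  assumes "a \<in> {0..1}" "b \<in> {0..1}"
  shows "{0..a} \<times> {0..b} \<in> sets borelI2"
proof -
  have "{0..a} \<times> {0..b} \<in> sets (borel :: (real \<times> real) measure)"
    by (intro borel_closed closed_Times) auto
  moreover have "{0..1} \<times> {0..1} \<in> sets (borel :: (real \<times> real) measure)"
    by (intro borel_closed closed_Times) auto
  ultimately show ?thesis unfolding borelI2_def using assms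
    by (subst sets_restrict_space_iff) auto
qed

lemma kernel_meas:
  assumes "markov_kernel_of C K" "a \<in> {0..1}" "b \<in> {0..1}"
  shows "(\<lambda>t. measure (K t) ({0..a} \<times> {0..b})) \<in> borel_measurable lebI"
proof -
  have "K \<in> measurable lebI (prob_algebra borelI2)"
    using assms(1) unfolding markov_kernel_of_def by simp
  then show ?thesis
    by (rule measurable_compose[OF _ measurable_measure_prob_algebra[OF box_sets[OF assms(2,3)]]])
qed

lemma kernel_prob:
  assumes "markov_kernel_of C K" "t \<in> {0..1}"
  shows "prob_space (K t)" "sets (K t) = sets borelI2"
proof -
  have "K \<in> measurable lebI (prob_algebra borelI2)"
    using assms(1) unfolding markov_kernel_of_def by simp
  moreover have "t \<in> space lebI" using assms(2) by (simp add: lebI_def)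
  ultimately have "K t \<in> space (prob_algebra borelI2)" by (rule measurable_space)
  then show "prob_space (K t)" "sets (K t) = sets borelI2"
    by (auto simp: space_prob_algebra)
qed

lemma kernel_AE:
  assumes K1: "markov_kernel_of C K1" and K2: "markov_kernel_of C K2"
    and a: "a \<in> {0..1}" and b: "b \<in> {0..1}"
  shows "AE t in lebI. measure (K1 t) ({0..a} \<times> {0..b}) = measure (K2 t) ({0..a} \<times> {0..b})"
proof (rule core)
  show "(\<lambda>t. measure (K1 t) ({0..a} \<times> {0..b})) \<in> borel_measurable lebI"
    by (rule kernel_meas[OF K1 a b])
  show "(\<lambda>t. measure (K2 t) ({0..a} \<times> {0..b})) \<in> borel_measurable lebI"
    by (rule kernel_meas[OF K2 a b])
  show "0 \<le> measure (K1 t) ({0..a} \<times> {0..b}) \<and> measure (K1 t) ({0..a} \<times> {0..b}) \<le> 1"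
    if "t \<in> {0..1}" for t
    using prob_space.prob_le_1[OF kernel_prob(1)[OF K1 that]] by simp
  show "0 \<le> measure (K2 t) ({0..a} \<times> {0..b}) \<and> measure (K2 t) ({0..a} \<times> {0..b}) \<le> 1"
    if "t \<in> {0..1}" for t
    using prob_space.prob_le_1[OF kernel_prob(1)[OF K2 that]] by simp
  show "(LINT t:{0..v}|lborel. measure (K1 t) ({0..a} \<times> {0..b})) =
        (LINT t:{0..v}|lborel. measure (K2 t) ({0..a} \<times> {0..b}))" if "v \<in> {0..1}" for v
    using K1 K2 a b that unfolding markov_kernel_of_def by metis
qed

lemma copula2_prod: "copula2 (\<lambda>x y. x * y)"
  unfolding copula2_def
proof (intro conjI ballI impI)
  fix a1 b1 a2 b2 :: real assume "a1 \<le> b1" "a2 \<le> b2"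
  then have "0 \<le> (b1 - a1) * (b2 - a2)" by simp
  then show "0 \<le> b1 * b2 - a1 * b2 - b1 * a2 + a1 * a2" by (simp add: algebra_simps)
qed auto

theorem theorem3p2:
  fixes C :: "real \<Rightarrow> real \<Rightarrow> real \<Rightarrow> real"
    and K :: "real \<Rightarrow> (real \<times> real) measure"
  assumes "copula3 C"
    and "completely_dependent C"
    and "markov_kernel_of C K"
  shows "generalized_simplified C K"
proof -
  obtain h1 h2 where h1: "lambda_preserving h1" and h2: "lambda_preserving h2"
    and K0: "markov_kernel_of C (\<lambda>v. return borelI2 (h1 v, h2 v))"
    using assms(2) unfolding completely_dependent_def by blast
  define K0 where "K0 = (\<lambda>v. return borelI2 (h1 v, h2 v))"
  have K0': "markov_kernel_of C K0" using K0 by (simp add: K0_def)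
  have h1m: "h1 \<in> measurable lebI lebI" using h1 by (simp add: lambda_preserving_def)
  have h2m: "h2 \<in> measurable lebI lebI" using h2 by (simp add: lambda_preserving_def)
  have hI: "h1 t \<in> {0..1}" "h2 t \<in> {0..1}" if "t \<in> {0..1}" for t
    using measurable_space[OF h1m, of t] measurable_space[OF h2m, of t] that
    by (auto simp: lebI_def)
  have K0val: "measure (K0 t) ({0..a} \<times> {0..b}) = indicator ({0..a} \<times> {0..b}) (h1 t, h2 t)"
    if "a \<in> {0..1}" "b \<in> {0..1}" for a b t
    unfolding K0_def by (rule measure_return[OF box_sets[OF that]])
  show ?thesis
    unfolding generalized_simplified_def
  proof (intro exI conjI ballI)
    show "copula2 (\<lambda>x y. x * y)" by (rule copula2_prod)
    fix u1 u2 v :: real assume u1: "u1 \<in> {0..1}" and u2: "u2 \<in> {0..1}" and v: "v \<in> {0..1}"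
    have one: "(1::real) \<in> {0..1}" by simp
    have ae1: "AE t in lebI. F13 K u1 t = measure (K0 t) ({0..u1} \<times> {0..1})"
      using kernel_AE[OF assms(3) K0' u1 one] by (simp add: F13_def)
    have ae2: "AE t in lebI. F23 K u2 t = measure (K0 t) ({0..1} \<times> {0..u2})"
      using kernel_AE[OF assms(3) K0' one u2] by (simp add: F23_def)
    have sp: "AE t in lebI. t \<in> {0..1}"
      by (rule AE_I2) (simp add: lebI_def)
    have ae: "AE t in lebI. measure (K0 t) ({0..u1} \<times> {0..u2}) = F13 K u1 t * F23 K u2 t"
      using ae1 ae2 sp
    proof eventually_elim
      case (elim t)
      then show ?case
        using hI[OF elim(3)] u1 u2
        by (simp add: K0val[OF u1 u2] K0val[OF u1 one] K0val[OF one u2] indicator_def)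
    qed
    have m1: "(\<lambda>t. measure (K0 t) ({0..u1} \<times> {0..u2})) \<in> borel_measurable lebI"
      by (rule kernel_meas[OF K0' u1 u2])
    have m2: "(\<lambda>t. F13 K u1 t * F23 K u2 t) \<in> borel_measurable lebI"
      unfolding F13_def F23_def
      by (intro borel_measurable_times kernel_meas[OF assms(3)] u1 u2 one)
    have "C u1 u2 v = (LINT t:{0..v}|lborel. measure (K0 t) ({0..u1} \<times> {0..u2}))"
      using K0' u1 u2 v unfolding markov_kernel_of_def by blast
    also have "\<dots> = (LINT t:{0..v}|lborel. F13 K u1 t * F23 K u2 t)"
      by (rule AE_lebI_set_integral[OF m1 m2 ae]) (use v in auto)
    finally show "C u1 u2 v = (LINT t:{0..v}|lborel. F13 K u1 t * F23 K u2 t)" .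
  qed
qed

end
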